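(* Let $\mathcal{C}$ be a finite set with $|\mathcal{C}|\ge2$ and let $\alpha=(\alpha_j)_{j\in\mathcal{C}}$ with $\alpha_j\in(0,1)$ rational and $\sum_j\alpha_j=1$. Then there exists an unbiased within-quota random roster for $\alpha$, i.e. a random map $\sigma:\{1,2,\dots\}\to\mathcal{C}$ such that, writing $N_j(l)=|\{k\le l:\sigma(k)=j\}|$, almost surely $\lfloor l\alpha_j\rfloor\le N_j(l)\le\lceil l\alpha_j\rceil$ for all $l\ge1$ and $j\in\mathcal{C}$, and $\mathbb{E}[N_j(l)]=l\alpha_j$ for all $l\ge1$ and $j\in\mathcal{C}$.
   Context: A roster is a map $\sigma:\{1,2,\dots\}\to\mathcal{C}$, interpreted as assigning the $k$-th position to category $\sigma(k)$. *)

theory Defs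
  imports "HOL-Probability.Probability"
begin

text \<open>A roster is a map from positions to categories; positions are 1,2,...
  (position 0 of the function is irrelevant). N_j(l) counts the positions
  k in {1..l} assigned to category j.\<close>

definition roster_count :: "(nat \<Rightarrow> 'c) \<Rightarrow> 'c \<Rightarrow> nat \<Rightarrow> nat" where
  "roster_count \<sigma> j l = card {k \<in> {1..l}. \<sigma> k = j}"

definition random_roster :: "(nat \<Rightarrow> 'c) measure \<Rightarrow> bool" where
  "random_roster M \<longleftrightarrow> prob_space M \<and>
     sets M = sets (PiM UNIV (\<lambda>_. count_space (UNIV :: 'c set)))"

definition unbiased_within_quota :: "('c \<Rightarrow> real) \<Rightarrow> (nat \<Rightarrow> 'c) measure \<Rightarrow> bool" where
  "unbiased_within_quota \<alpha> M \<longleftrightarrow> random_roster M \<and>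
     (AE \<sigma> in M. \<forall>l\<ge>1. \<forall>j.
        \<lfloor>real l * \<alpha> j\<rfloor> \<le> int (roster_count \<sigma> j l) \<and>
        int (roster_count \<sigma> j l) \<le> \<lceil>real l * \<alpha> j\<rceil>) \<and>
     (\<forall>l\<ge>1. \<forall>j. (\<integral>\<sigma>. real (roster_count \<sigma> j l) \<partial>M) = real l * \<alpha> j)"

end

theory Submission
  imports Defs
begin

lemma hall:
  fixes N :: "'b \<Rightarrow> 'a set"
  assumes "finite B" "\<forall>b\<in>B. finite (N b)" "\<forall>T\<subseteq>B. card T \<le> card (\<Union>(N ` T))"
  shows "\<exists>g. inj_on g B \<and> (\<forall>b\<in>B. g b \<in> N b)"
  using assms
proof (induction "card B" arbitrary: B N rule: less_induct)
  case less
  show ?case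
  proof (cases "B = {}")
    case True then show ?thesis by auto
  next
    case Bne: False
    show ?thesis
    proof (cases "\<forall>T. T \<subseteq> B \<and> T \<noteq> {} \<and> T \<noteq> B \<longrightarrow> card T < card (\<Union>(N ` T))")
      case True
      obtain b0 where b0: "b0 \<in> B" using Bne by auto
      have "card {b0} \<le> card (\<Union>(N ` {b0}))" using less.prems(3) b0 by (meson empty_subsetI insert_subset)
      then have "N b0 \<noteq> {}" by auto
      then obtain a0 where a0: "a0 \<in> N b0" by auto
      define B' where "B' = B - {b0}"
      define N' where "N' = (\<lambda>b. N b - {a0})"
      have cB: "card B' < card B" unfolding B'_def using b0 less.prems(1) by (intro card_Diff1_less)
      have H: "\<forall>T\<subseteq>B'. card T \<le> card (\<Union>(N' ` T))"
      proof (intro allI impI)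
        fix T assume T: "T \<subseteq> B'"
        show "card T \<le> card (\<Union>(N' ` T))"
        proof (cases "T = {}")
          case True then show ?thesis by simp
        next
          case False
          have "T \<noteq> B" using T b0 by (auto simp: B'_def)
          moreover have "T \<subseteq> B" using T by (auto simp: B'_def)
          ultimately have lt: "card T < card (\<Union>(N ` T))" using True[rule_format, OF conjI[OF \<open>T \<subseteq> B\<close> conjI[OF False \<open>T \<noteq> B\<close>]]] by blast
          have fin: "finite (\<Union>(N ` T))"
            by (rule finite_UN_I) (use \<open>T \<subseteq> B\<close> less.prems(1,2) finite_subset in auto)
          have "\<Union>(N ` T) \<subseteq> insert a0 (\<Union>(N' ` T))" by (auto simp: N'_def)
          hence "card (\<Union>(N ` T)) \<le> card (insert a0 (\<Union>(N' ` T)))"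
            by (intro card_mono) (use fin in \<open>auto simp: N'_def\<close>)
          also have "\<dots> \<le> Suc (card (\<Union>(N' ` T)))" by (simp add: card_insert_le_m1)
          finally show ?thesis using lt by simp
        qed
      qed
      have fB': "finite B'" using less.prems(1) by (simp add: B'_def)
      have fN': "\<forall>b\<in>B'. finite (N' b)" using less.prems(2) by (simp add: B'_def N'_def)
      obtain g where g: "inj_on g B'" "\<forall>b\<in>B'. g b \<in> N' b"
        using less.hyps[OF cB fB' fN' H] by blast
      define g' where "g' = g(b0 := a0)"
      have "inj_on g' B"
        unfolding inj_on_def g'_def
        using g b0 by (auto simp: B'_def N'_def inj_on_def)
      moreover have "\<forall>b\<in>B. g' b \<in> N b" using g a0 by (auto simp: g'_def B'_def N'_def)
      ultimately show ?thesis by blast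
    next
      case False
      from False have "\<exists>T. \<not> (T \<subseteq> B \<and> T \<noteq> {} \<and> T \<noteq> B \<longrightarrow> card T < card (\<Union>(N ` T)))"
        by (simp only: not_all)
      then obtain T where T': "\<not> (T \<subseteq> B \<and> T \<noteq> {} \<and> T \<noteq> B \<longrightarrow> card T < card (\<Union>(N ` T)))"
        by (elim exE)
      hence T: "T \<subseteq> B" "T \<noteq> {}" "T \<noteq> B" "card (\<Union>(N ` T)) \<le> card T" by simp_all
      define U where "U = \<Union>(N ` T)"
      have finU: "finite U" unfolding U_def
        by (rule finite_UN_I) (use T(1) less.prems(1,2) finite_subset in auto)
      have finT: "finite T" using finite_subset[OF T(1) less.prems(1)] .
      have c1: "card T < card B" using T(1,3) less.prems(1) by (intro psubset_card_mono) auto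
      have c2: "card (B - T) < card B" using T less.prems(1)
        by (intro psubset_card_mono) auto
      have fN1: "\<forall>b\<in>T. finite (N b)" using less.prems(2) T(1) by (simp add: subset_eq)
      have H1: "\<forall>T'\<subseteq>T. card T' \<le> card (\<Union>(N ` T'))"
      proof (intro allI impI)
        fix T' assume "T' \<subseteq> T"
        show "card T' \<le> card (\<Union>(N ` T'))" using less.prems(3)[rule_format, OF order.trans[OF \<open>T' \<subseteq> T\<close> T(1)]] .
      qed
      obtain g1 where g1: "inj_on g1 T" "\<forall>b\<in>T. g1 b \<in> N b"
        using less.hyps[OF c1 finT fN1 H1] by (elim exE conjE)
      define N2 where "N2 = (\<lambda>b. N b - U)"
      have H2: "\<forall>T'\<subseteq>B - T. card T' \<le> card (\<Union>(N2 ` T'))"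
      proof (intro allI impI)
        fix T' assume T': "T' \<subseteq> B - T"
        have finT': "finite T'" using finite_subset[OF T' ] less.prems(1) by simp
        have fin2: "finite (\<Union>(N2 ` T'))" 
          by (rule finite_UN_I[OF finT']) (use T' less.prems(2) in \<open>auto simp: N2_def\<close>)
        have eq: "\<Union>(N ` (T \<union> T')) = U \<union> \<Union>(N2 ` T')" by (auto simp: U_def N2_def)
        have disj: "U \<inter> \<Union>(N2 ` T') = {}" by (auto simp: N2_def)
        have "card T + card T' = card (T \<union> T')"
          using T' finT finT' by (subst card_Un_disjoint) auto
        also have "\<dots> \<le> card (\<Union>(N ` (T \<union> T')))" by (intro less.prems(3)[rule_format]) (use T' T(1) in auto)
        also have "\<dots> = card U + card (\<Union>(N2 ` T'))" unfolding eq
          using disj finU fin2 by (simp add: card_Un_disjoint)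
        finally show "card T' \<le> card (\<Union>(N2 ` T'))" using T(4) unfolding U_def by linarith
      qed
      have fB2: "finite (B - T)" using less.prems(1) by simp
      have fN2: "\<forall>b\<in>B - T. finite (N2 b)" using less.prems(2) by (simp add: N2_def)
      obtain g2 where g2: "inj_on g2 (B - T)" "\<forall>b\<in>B - T. g2 b \<in> N2 b"
        using less.hyps[OF c2 fB2 fN2 H2] by (elim exE conjE)
      define g where "g = (\<lambda>b. if b \<in> T then g1 b else g2 b)"
      have im1: "\<forall>b\<in>T. g1 b \<in> U" using g1 unfolding U_def by blast
      have im2: "\<forall>b\<in>B-T. g2 b \<notin> U" using g2 unfolding N2_def by blast
      have "inj_on g B"
        unfolding inj_on_def g_def
      proof (intro ballI impI)
        fix x y assume xy: "x \<in> B" "y \<in> B" "(if x \<in> T then g1 x else g2 x) = (if y \<in> T then g1 y else g2 y)"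
        show "x = y"
        proof (cases "x \<in> T"; cases "y \<in> T")
          assume "x \<in> T" "y \<in> T" thus ?thesis using xy(3) g1(1) by (simp add: inj_on_eq_iff)
        next
          assume "x \<in> T" "y \<notin> T" thus ?thesis using xy im1 im2 by force
        next
          assume "x \<notin> T" "y \<in> T" thus ?thesis using xy im1 im2 by force
        next
          assume "x \<notin> T" "y \<notin> T" thus ?thesis using xy g2(1) by (simp add: inj_on_eq_iff)
        qed
      qed
      moreover have "\<forall>b\<in>B. g b \<in> N b" using g1 g2 by (auto simp: g_def N2_def)
      ultimately show ?thesis by blast
    qed
  qed
qed

lemma perm_in_support:
  fixes x :: "'a \<Rightarrow> 'b \<Rightarrow> real"
  assumes fA: "finite A" and fB: "finite B" and nn: "\<And>a b. 0 \<le> x a b"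
    and row: "\<And>a. a \<in> A \<Longrightarrow> (\<Sum>b\<in>B. x a b) = 1"
    and col: "\<And>b. b \<in> B \<Longrightarrow> (\<Sum>a\<in>A. x a b) = 1"
  shows "\<exists>g. bij_betw g B A \<and> (\<forall>b\<in>B. 0 < x (g b) b)"
proof -
  define N where "N = (\<lambda>b. {a\<in>A. 0 < x a b})"
  have fN: "\<forall>b\<in>B. finite (N b)" using fA by (simp add: N_def)
  have H: "\<forall>T\<subseteq>B. card T \<le> card (\<Union>(N ` T))"
  proof (intro allI impI)
    fix T assume T: "T \<subseteq> B"
    define U where "U = \<Union>(N ` T)"
    have UA: "U \<subseteq> A" by (auto simp: U_def N_def)
    have fT: "finite T" using finite_subset[OF T fB] .
    have fU: "finite U" using finite_subset[OF UA fA] .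
    have "real (card T) = (\<Sum>b\<in>T. \<Sum>a\<in>A. x a b)"
      using col T by (simp add: subset_eq)
    also have "\<dots> = (\<Sum>b\<in>T. \<Sum>a\<in>U. x a b)"
    proof (rule sum.cong[OF refl])
      fix b assume b: "b \<in> T"
      show "(\<Sum>a\<in>A. x a b) = (\<Sum>a\<in>U. x a b)"
      proof (rule sum.mono_neutral_right[OF fA UA], rule ballI)
        fix a assume a: "a \<in> A - U"
        have "\<not> 0 < x a b" using a b by (auto simp: U_def N_def)
        thus "x a b = 0" using nn[of a b] by simp
      qed
    qed
    also have "\<dots> = (\<Sum>a\<in>U. \<Sum>b\<in>T. x a b)" by (rule sum.swap)
    also have "\<dots> \<le> (\<Sum>a\<in>U. \<Sum>b\<in>B. x a b)"
      by (intro sum_mono sum_mono2[OF fB T]) (simp add: nn)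
    also have "\<dots> = real (card U)" using row UA by (simp add: subset_eq)
    finally show "card T \<le> card (\<Union>(N ` T))" by (simp add: U_def)
  qed
  obtain g where g: "inj_on g B" "\<forall>b\<in>B. g b \<in> N b"
    using hall[OF fB fN H] by (elim exE conjE)
  have "real (card A) = (\<Sum>a\<in>A. \<Sum>b\<in>B. x a b)" using row by simp
  also have "\<dots> = (\<Sum>b\<in>B. \<Sum>a\<in>A. x a b)" by (rule sum.swap)
  also have "\<dots> = real (card B)" using col by simp
  finally have cAB: "card A = card B" by simp
  have sub: "g ` B \<subseteq> A" using g(2) by (auto simp: N_def)
  have "card (g ` B) = card A" using card_image[OF g(1)] cAB by simp
  hence "g ` B = A" using card_subset_eq[OF fA sub] by simp
  hence "bij_betw g B A" using g(1) by (simp add: bij_betw_def)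
  moreover have "\<forall>b\<in>B. 0 < x (g b) b" using g(2) by (simp add: N_def)
  ultimately show ?thesis by blast
qed

lemma prob_bind_bernoulli:
  assumes "0 \<le> l" "l \<le> 1"
  shows "measure_pmf.prob (bind_pmf (bernoulli_pmf l) (\<lambda>c. if c then P else Q)) X
         = l * measure_pmf.prob P X + (1 - l) * measure_pmf.prob Q X"
proof -
  have "emeasure (measure_pmf (bind_pmf (bernoulli_pmf l) (\<lambda>c. if c then P else Q))) X
        = emeasure (measure_pmf P) X * ennreal l + emeasure (measure_pmf Q) X * ennreal (1 - l)"
    using assms by simp
  also have "\<dots> = ennreal (l * measure_pmf.prob P X + (1 - l) * measure_pmf.prob Q X)"
    using assms by (simp add: measure_pmf.emeasure_eq_measure ennreal_mult' ennreal_plus mult.commute)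
  finally have "ennreal (measure_pmf.prob (bind_pmf (bernoulli_pmf l) (\<lambda>c. if c then P else Q)) X)
     = ennreal (l * measure_pmf.prob P X + (1 - l) * measure_pmf.prob Q X)"
    by (simp only: measure_pmf.emeasure_eq_measure)
  then show ?thesis using assms by (subst (asm) ennreal_inj) auto

qed

lemma birkhoff_pmf:
  fixes x :: "'a \<Rightarrow> 'b \<Rightarrow> real"
  assumes fA: "finite A" and fB: "finite B" and nn: "\<And>a b. 0 \<le> x a b"
    and row: "\<And>a. a \<in> A \<Longrightarrow> (\<Sum>b\<in>B. x a b) = 1"
    and col: "\<And>b. b \<in> B \<Longrightarrow> (\<Sum>a\<in>A. x a b) = 1"
  shows "\<exists>p :: ('b \<Rightarrow> 'a) pmf. finite (set_pmf p) \<and>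
     (\<forall>g\<in>set_pmf p. bij_betw g B A \<and> (\<forall>b\<in>B. 0 < x (g b) b)) \<and>
     (\<forall>b\<in>B. \<forall>S. measure_pmf.prob p {g. g b \<in> S} = (\<Sum>a\<in>A \<inter> S. x a b))"
proof -
  have "\<forall>x. n = card {(a,b). a \<in> A \<and> b \<in> B \<and> x a b \<noteq> 0} \<longrightarrow> (\<forall>a b. 0 \<le> x a b) \<longrightarrow>
     (\<forall>a\<in>A. (\<Sum>b\<in>B. x a b) = 1) \<longrightarrow> (\<forall>b\<in>B. (\<Sum>a\<in>A. x a b) = 1) \<longrightarrow>
    (\<exists>p :: ('b \<Rightarrow> 'a) pmf. finite (set_pmf p) \<and>
     (\<forall>g\<in>set_pmf p. bij_betw g B A \<and> (\<forall>b\<in>B. 0 < x (g b) b)) \<and>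
     (\<forall>b\<in>B. \<forall>S. measure_pmf.prob p {g. g b \<in> S} = (\<Sum>a\<in>A \<inter> S. x a b)))" for n
proof (induction n rule: less_induct)
  case (less n)
  show ?case
  proof (intro allI impI)
  fix x :: "'a \<Rightarrow> 'b \<Rightarrow> real"
  assume nE: "n = card {(a,b). a \<in> A \<and> b \<in> B \<and> x a b \<noteq> 0}" and nn0: "\<forall>a b. 0 \<le> x a b"
    and row0: "\<forall>a\<in>A. (\<Sum>b\<in>B. x a b) = 1" and col0: "\<forall>b\<in>B. (\<Sum>a\<in>A. x a b) = 1"
  have nn: "\<And>a b. 0 \<le> x a b" using nn0 by blast
  have row: "\<And>a. a \<in> A \<Longrightarrow> (\<Sum>b\<in>B. x a b) = 1" using row0 by blast
  have col: "\<And>b. b \<in> B \<Longrightarrow> (\<Sum>a\<in>A. x a b) = 1" using col0 by blast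
  obtain g where g: "bij_betw g B A" "\<forall>b\<in>B. 0 < x (g b) b"
  proof -
    have "\<exists>g. bij_betw g B A \<and> (\<forall>b\<in>B. 0 < x (g b) b)"
      by (rule perm_in_support[OF fA fB nn]; simp add: row col)
    thus ?thesis using that by blast
  qed
  have gA: "\<And>b. b \<in> B \<Longrightarrow> g b \<in> A" using g(1) bij_betwE by blast
  show "\<exists>p :: ('b \<Rightarrow> 'a) pmf. finite (set_pmf p) \<and>
     (\<forall>g\<in>set_pmf p. bij_betw g B A \<and> (\<forall>b\<in>B. 0 < x (g b) b)) \<and>
     (\<forall>b\<in>B. \<forall>S. measure_pmf.prob p {g. g b \<in> S} = (\<Sum>a\<in>A \<inter> S. x a b))"
  proof (cases "B = {}")
    case True
    then show ?thesis by (intro exI[of _ "return_pmf g"]) (use g in auto)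
  next
    case Bne: False
    define l where "l = Min ((\<lambda>b. x (g b) b) ` B)"
    have "l \<in> (\<lambda>b. x (g b) b) ` B" unfolding l_def using fB Bne by (intro Min_in) auto
    then obtain b0 where b0: "b0 \<in> B" "x (g b0) b0 = l" by auto
    have l_le: "\<And>b. b \<in> B \<Longrightarrow> l \<le> x (g b) b" unfolding l_def using fB by simp
    have l_pos: "0 < l" using g(2) b0 by auto
    have x_le1: "\<And>a b. a \<in> A \<Longrightarrow> b \<in> B \<Longrightarrow> x a b \<le> 1"
    proof -
      fix a b assume "a \<in> A" "b \<in> B"
      have "x a b \<le> (\<Sum>a\<in>A. x a b)" by (rule member_le_sum) (use \<open>a \<in> A\<close> nn fA in auto)
      thus "x a b \<le> 1" using col[OF \<open>b \<in> B\<close>] by simp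
    qed
    have others0: "\<And>a b. a \<in> A \<Longrightarrow> b \<in> B \<Longrightarrow> a \<noteq> g b \<Longrightarrow> x (g b) b = 1 \<Longrightarrow> x a b = 0"
    proof -
      fix a b assume ab: "a \<in> A" "b \<in> B" "a \<noteq> g b" "x (g b) b = 1"
      have "(\<Sum>a\<in>A. x a b) = x (g b) b + (\<Sum>a\<in>A - {g b}. x a b)"
        using gA[OF ab(2)] fA by (simp add: sum.remove)
      hence "(\<Sum>a\<in>A - {g b}. x a b) = 0" using col[OF ab(2)] ab(4) by simp
      hence "\<forall>a\<in>A - {g b}. x a b = 0" using fA nn by (simp add: sum_nonneg_eq_0_iff)
      thus "x a b = 0" using ab by simp
    qed
    show ?thesis
    proof (cases "l \<ge> 1")
      case True
      have one: "\<And>b. b \<in> B \<Longrightarrow> x (g b) b = 1"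
        using l_le True x_le1 gA by (meson dual_order.antisym order_trans)
      show ?thesis
      proof (intro exI[of _ "return_pmf g"] conjI)
        show "finite (set_pmf (return_pmf g))" by simp
        show "\<forall>g'\<in>set_pmf (return_pmf g). bij_betw g' B A \<and> (\<forall>b\<in>B. 0 < x (g' b) b)" using g by simp
      next
        show "\<forall>b\<in>B. \<forall>S. measure_pmf.prob (return_pmf g) {g'. g' b \<in> S} = (\<Sum>a\<in>A \<inter> S. x a b)"
        proof (intro ballI allI)
        fix b S assume b: "b \<in> B"
        have "(\<Sum>a\<in>A \<inter> S. x a b) = (\<Sum>a\<in>A \<inter> S. if a = g b then 1 else 0)"
          using one[OF b] others0[OF _ b] by (intro sum.cong) auto
        also have "\<dots> = indicator S (g b)" using gA[OF b] fA by (simp add: indicator_def)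
        finally show "measure_pmf.prob (return_pmf g) {g'. g' b \<in> S} = (\<Sum>a\<in>A \<inter> S. x a b)"
          by (simp add: indicator_def)
        qed
      qed
    next
      case False
      hence l1: "l < 1" by simp
      define x' where "x' = (\<lambda>a b. (x a b - (if b \<in> B \<and> a = g b then l else 0)) / (1 - l))"
      have nn': "\<And>a b. 0 \<le> x' a b" unfolding x'_def using l1 l_le nn by auto
      have sub_row: "\<And>a. a \<in> A \<Longrightarrow> (\<Sum>b\<in>B. (if b \<in> B \<and> a = g b then l else 0)) = l"
      proof -
        fix a assume a: "a \<in> A"
        have "(\<Sum>b\<in>B. (if b \<in> B \<and> a = g b then l else 0)) = (\<Sum>b\<in>B. (\<lambda>a'. if a = a' then l else 0) (g b))"
          by (intro sum.cong) auto
        also have "\<dots> = (\<Sum>a'\<in>A. if a = a' then l else 0)"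
          by (rule sum.reindex_bij_betw[OF g(1)])
        also have "\<dots> = l" using a fA by simp
        finally show "(\<Sum>b\<in>B. (if b \<in> B \<and> a = g b then l else 0)) = l" .
      qed
      have sub_col: "\<And>b. b \<in> B \<Longrightarrow> (\<Sum>a\<in>A. (if b \<in> B \<and> a = g b then l else 0)) = l"
        using gA fA by (simp add: sum.delta')
      have row': "\<And>a. a \<in> A \<Longrightarrow> (\<Sum>b\<in>B. x' a b) = 1"
      proof -
        fix a assume a: "a \<in> A"
        have "(\<Sum>b\<in>B. x' a b) = ((\<Sum>b\<in>B. x a b) - (\<Sum>b\<in>B. (if b \<in> B \<and> a = g b then l else 0))) / (1 - l)"
          unfolding x'_def by (simp add: sum_divide_distrib[symmetric] sum_subtractf)
        thus "(\<Sum>b\<in>B. x' a b) = 1" using row[OF a] sub_row[OF a] l1 by simp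
      qed
      have col': "\<And>b. b \<in> B \<Longrightarrow> (\<Sum>a\<in>A. x' a b) = 1"
      proof -
        fix b assume b: "b \<in> B"
        have "(\<Sum>a\<in>A. x' a b) = ((\<Sum>a\<in>A. x a b) - (\<Sum>a\<in>A. (if b \<in> B \<and> a = g b then l else 0))) / (1 - l)"
          unfolding x'_def by (simp add: sum_divide_distrib[symmetric] sum_subtractf)
        thus "(\<Sum>a\<in>A. x' a b) = 1" using col[OF b] sub_col[OF b] l1 by simp
      qed
      have supp_sub: "{(a,b). a \<in> A \<and> b \<in> B \<and> x' a b \<noteq> 0} \<subseteq> {(a,b). a \<in> A \<and> b \<in> B \<and> x a b \<noteq> 0}"
      proof (clarify)
        fix a b assume ab: "a \<in> A" "b \<in> B" "x' a b \<noteq> 0" "x a b = 0"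
        show False
        proof (cases "a = g b")
          case True thus False using ab l_le[OF ab(2)] l_pos by simp
        next
          case False thus False using ab by (simp add: x'_def)
        qed
      qed
      have notin: "(g b0, b0) \<notin> {(a,b). a \<in> A \<and> b \<in> B \<and> x' a b \<noteq> 0}"
        using b0 l1 by (simp add: x'_def)
      have isin: "(g b0, b0) \<in> {(a,b). a \<in> A \<and> b \<in> B \<and> x a b \<noteq> 0}"
        using b0 gA l_pos by simp
      have fin: "finite {(a,b). a \<in> A \<and> b \<in> B \<and> x a b \<noteq> 0}"
        by (rule finite_subset[of _ "A \<times> B"]) (use fA fB in auto)
      have lt: "card {(a,b). a \<in> A \<and> b \<in> B \<and> x' a b \<noteq> 0} < card {(a,b). a \<in> A \<and> b \<in> B \<and> x a b \<noteq> 0}"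
        by (rule psubset_card_mono[OF fin]) (use supp_sub notin isin in blast)
      obtain p' where p': "finite (set_pmf p')"
        "\<forall>g\<in>set_pmf p'. bij_betw g B A \<and> (\<forall>b\<in>B. 0 < x' (g b) b)"
        "\<forall>b\<in>B. \<forall>S. measure_pmf.prob p' {g. g b \<in> S} = (\<Sum>a\<in>A \<inter> S. x' a b)"
        using less.IH[OF lt[folded nE], rule_format, OF refl] nn' row' col' by blast
      define p where "p = bind_pmf (bernoulli_pmf l) (\<lambda>c. if c then return_pmf g else p')"
      have setp: "set_pmf p = {g} \<union> set_pmf p'"
        unfolding p_def using l_pos l1 by (auto split: if_splits)
      show ?thesis
      proof (intro exI[of _ p] conjI)
        show "finite (set_pmf p)" using setp p'(1) by simp
        show "\<forall>g'\<in>set_pmf p. bij_betw g' B A \<and> (\<forall>b\<in>B. 0 < x (g' b) b)"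
        proof
        fix g' assume "g' \<in> set_pmf p"
        hence "g' = g \<or> g' \<in> set_pmf p'" using setp by simp
        then show "bij_betw g' B A \<and> (\<forall>b\<in>B. 0 < x (g' b) b)"
        proof
          assume "g' = g" thus ?thesis using g by simp
        next
          assume g': "g' \<in> set_pmf p'"
          have "\<forall>b\<in>B. 0 < x (g' b) b"
          proof
            fix b assume b: "b \<in> B"
            have "0 < x' (g' b) b" using p'(2) g' b by blast
            hence "0 < x (g' b) b - (if b \<in> B \<and> g' b = g b then l else 0)"
              using l1 by (simp add: x'_def zero_less_divide_iff)
            thus "0 < x (g' b) b" using l_pos by (auto split: if_splits)
          qed
          thus ?thesis using p'(2) g' by blast
        qed
        qed
      next
        show "\<forall>b\<in>B. \<forall>S. measure_pmf.prob p {g'. g' b \<in> S} = (\<Sum>a\<in>A \<inter> S. x a b)"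
        proof (intro ballI allI)
        fix b S assume b: "b \<in> B"
        have "measure_pmf.prob p {g'. g' b \<in> S} = l * indicator S (g b) + (1 - l) * (\<Sum>a\<in>A \<inter> S. x' a b)"
          unfolding p_def using l_pos l1 p'(3) b by (subst prob_bind_bernoulli) (auto simp: indicator_def)
        also have "(1 - l) * (\<Sum>a\<in>A \<inter> S. x' a b) = (\<Sum>a\<in>A \<inter> S. x a b) - (\<Sum>a\<in>A \<inter> S. if a = g b then l else 0)"
          using l1 b unfolding x'_def by (simp add: sum_distrib_left sum_subtractf)
        also have "(\<Sum>a\<in>A \<inter> S. if a = g b then l else 0) = l * indicator S (g b)"
          using fA gA[OF b] by (simp add: sum.delta' indicator_def)
        finally show "measure_pmf.prob p {g'. g' b \<in> S} = (\<Sum>a\<in>A \<inter> S. x a b)" by simp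
        qed
      qed
    qed
  qed
  qed
qed
  thus ?thesis using nn row col by blast
qed

lemma common_denom:
  fixes \<alpha> :: "'c::finite \<Rightarrow> real"
  assumes "\<And>j. \<alpha> j \<in> \<rat>"
  shows "\<exists>Q::nat. Q > 0 \<and> (\<forall>j. \<exists>m::int. \<alpha> j * real Q = real_of_int m)"
proof -
  have "\<forall>j. \<exists>ab::int\<times>int. snd ab > 0 \<and> \<alpha> j = of_int (fst ab) / of_int (snd ab)"
  proof
    fix j
    obtain a b where "b > 0" "\<alpha> j = of_int a / of_int b" using Rats_cases'[OF assms[of j]] by metis
    thus "\<exists>ab::int\<times>int. snd ab > 0 \<and> \<alpha> j = of_int (fst ab) / of_int (snd ab)" by (intro exI[of _ "(a,b)"]) simp
  qed
  then obtain f where f: "\<And>j. snd (f j) > 0" "\<And>j. \<alpha> j = of_int (fst (f j)) / of_int (snd (f j))"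
    by metis
  define D where "D = (\<Prod>j\<in>UNIV. snd (f j))"
  have Dpos: "D > 0" unfolding D_def using f(1) by (simp add: prod_pos)
  show ?thesis
  proof (intro exI[of _ "nat D"] conjI allI)
    show "0 < nat D" using Dpos by simp
    fix j
    have "D = snd (f j) * (\<Prod>k\<in>UNIV - {j}. snd (f k))"
      unfolding D_def by (simp add: prod.remove)
    hence "\<alpha> j * real (nat D) = real_of_int (fst (f j) * (\<Prod>k\<in>UNIV - {j}. snd (f k)))"
      using f(1)[of j] f(2)[of j] Dpos
      by (simp add: field_simps)
    thus "\<exists>m::int. \<alpha> j * real (nat D) = real_of_int m" by blast
  qed
qed

lemma tile:
  fixes p :: nat
  shows "(\<Sum>k\<in>{1..N}. card ({(k-1)*p..<k*p} \<inter> S)) = card ({0..<N*p} \<inter> S)"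
proof (induction N)
  case 0 then show ?case by simp
next
  case (Suc N)
  have "{0..<Suc N * p} \<inter> S = ({0..<N*p} \<inter> S) \<union> ({N*p..<Suc N*p} \<inter> S)" by auto
  hence "card ({0..<Suc N * p} \<inter> S) = card ({0..<N*p} \<inter> S) + card ({N*p..<Suc N*p} \<inter> S)"
    by (simp add: card_Un_disjoint disjoint_iff)
  then show ?case using Suc by simp
qed

lemma ov_pos:
  assumes "0 < card ({a..<b} \<inter> {c..<(d::nat)})"
  shows "a < d \<and> c < b"
proof -
  obtain t where "t \<in> {a..<b} \<inter> {c..<d}" using assms by (metis card.empty less_irrefl ex_in_conv)
  thus ?thesis by auto
qed

definition ov :: "nat \<Rightarrow> nat \<Rightarrow> nat \<Rightarrow> nat \<Rightarrow> nat" where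
  "ov Q p n k = card ({(k-1)*p..<k*p} \<inter> {(n-1)*Q..<n*Q})"

definition rost :: "nat \<Rightarrow> (nat \<Rightarrow> 'c \<times> nat) \<Rightarrow> nat \<Rightarrow> 'c" where
  "rost Q g k = fst (g ((k - 1) mod Q + 1))"

definition gidx :: "nat \<Rightarrow> ('c \<Rightarrow> nat) \<Rightarrow> (nat \<Rightarrow> 'c \<times> nat) \<Rightarrow> nat \<Rightarrow> nat" where
  "gidx Q P g k = snd (g ((k-1) mod Q + 1)) + ((k-1) div Q) * P (fst (g ((k-1) mod Q + 1)))"

definition good :: "nat \<Rightarrow> ('c \<Rightarrow> nat) \<Rightarrow> (nat \<Rightarrow> 'c \<times> nat) \<Rightarrow> bool" where
  "good Q P g \<longleftrightarrow> bij_betw g {1..Q} (SIGMA j:UNIV. {1..P j}) \<and>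
     (\<forall>k\<in>{1..Q}. 0 < ov Q (P (fst (g k))) (snd (g k)) k)"

lemma window:
  assumes Q: "Q > 0" and gd: "good Q P g" and k: "k \<ge> 1"
  shows "(k-1) * P (rost Q g k) < gidx Q P g k * Q \<and> (gidx Q P g k - 1) * Q < k * P (rost Q g k)
         \<and> 1 \<le> gidx Q P g k"
proof -
  define k' where "k' = (k-1) mod Q + 1"
  define a where "a = (k-1) div Q"
  have k'B: "k' \<in> {1..Q}" unfolding k'_def using Q by (simp add: Suc_leI)
  obtain j n where jn: "g k' = (j, n)" by fastforce
  have "g k' \<in> (SIGMA j:UNIV. {1..P j})" using gd k'B unfolding good_def bij_betw_def by blast
  hence n: "1 \<le> n" "n \<le> P j" using jn by auto
  have "0 < ov Q (P j) n k'" using gd k'B jn unfolding good_def by force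
  hence w: "(k'-1) * P j < n * Q \<and> (n-1) * Q < k' * P j" unfolding ov_def by (rule ov_pos)
  obtain k'' where k'': "k' = Suc k''" using k'B by (cases k') auto
  obtain n' where n': "n = Suc n'" using n by (cases n) auto
  have kk: "k = Suc (a * Q + k'')" using k k'' unfolding a_def k'_def
    by (metis Suc_eq_plus1 add_Suc_right div_mult_mod_eq le_add_diff_inverse2 add.commute mult.commute)
  have rj: "rost Q g k = j" unfolding rost_def using jn k'_def by simp
  have gi: "gidx Q P g k = n + a * P j" unfolding gidx_def using jn k'_def a_def by simp
  have w1: "k'' * P j < Suc n' * Q" "n' * Q < Suc k'' * P j" using w k'' n' by auto
  have "(k-1) * P j = a * Q * P j + k'' * P j" using kk by (simp add: algebra_simps)
  also have "\<dots> < a * Q * P j + Suc n' * Q" using w1(1) by simp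
  also have "\<dots> = (n + a * P j) * Q" using n' by (simp add: algebra_simps)
  finally have A: "(k-1) * P j < (n + a * P j) * Q" .
  have "(n + a * P j - 1) * Q = n' * Q + a * Q * P j" using n' by (simp add: algebra_simps)
  also have "\<dots> < Suc k'' * P j + a * Q * P j" using w1(2) by simp
  also have "\<dots> = k * P j" using kk by (simp add: algebra_simps)
  finally have B: "(n + a * P j - 1) * Q < k * P j" .
  show ?thesis using A B n rj gi by simp
qed

lemma decomp:
  fixes k Q :: nat
  assumes Q: "Q > 0" and k: "k \<ge> 1"
  shows "k = ((k-1) div Q) * Q + ((k-1) mod Q + 1)"
proof -
  have "k - 1 = (k-1) div Q * Q + (k-1) mod Q" by (rule div_mult_mod_eq[symmetric])
  thus ?thesis using k by linarith
qed

lemma gidx_inj: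
  assumes Q: "Q > 0" and gd: "good Q P g" and k1: "k1 \<ge> 1" and k2: "k2 \<ge> 1"
    and r: "rost Q g k1 = rost Q g k2" and gi: "gidx Q P g k1 = gidx Q P g k2"
  shows "k1 = k2"
proof -
  define k1' where "k1' = (k1-1) mod Q + 1"
  define k2' where "k2' = (k2-1) mod Q + 1"
  define a1 where "a1 = (k1-1) div Q"
  define a2 where "a2 = (k2-1) div Q"
  have B1: "k1' \<in> {1..Q}" unfolding k1'_def using Q by (simp add: Suc_leI)
  have B2: "k2' \<in> {1..Q}" unfolding k2'_def using Q by (simp add: Suc_leI)
  obtain j1 n1 where jn1: "g k1' = (j1, n1)" by fastforce
  obtain j2 n2 where jn2: "g k2' = (j2, n2)" by fastforce
  have "g k1' \<in> (SIGMA j:UNIV. {1..P j})" using gd B1 unfolding good_def bij_betw_def by blast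
  hence n1: "1 \<le> n1" "n1 \<le> P j1" using jn1 by auto
  have "g k2' \<in> (SIGMA j:UNIV. {1..P j})" using gd B2 unfolding good_def bij_betw_def by blast
  hence n2: "1 \<le> n2" "n2 \<le> P j2" using jn2 by auto
  have j: "j1 = j2" using r jn1 jn2 unfolding rost_def k1'_def k2'_def by simp
  have e: "n1 + a1 * P j1 = n2 + a2 * P j1" using gi jn1 jn2 j unfolding gidx_def k1'_def k2'_def a1_def a2_def by simp
  have e': "(n1 - 1) + a1 * P j1 = (n2 - 1) + a2 * P j1" using e n1 n2 by simp
  have m1: "(n1 - 1) < P j1" "(n2 - 1) < P j1" using n1 n2 j by auto
  have "((n1 - 1) + a1 * P j1) mod P j1 = n1 - 1" using m1 by simp
  moreover have "((n2 - 1) + a2 * P j1) mod P j1 = n2 - 1" using m1 by simp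
  ultimately have nn: "n1 = n2" using e' n1 n2 by simp
  have "((n1 - 1) + a1 * P j1) div P j1 = a1" using m1 by simp
  moreover have "((n2 - 1) + a2 * P j1) div P j1 = a2" using m1 by simp
  ultimately have aa: "a1 = a2" using e' by simp
  have "g k1' = g k2'" using jn1 jn2 j nn by simp
  moreover have inj: "inj_on g {1..Q}" using gd unfolding good_def bij_betw_def by blast
  ultimately have "k1' = k2'" using B1 B2 inj_onD by metis
  thus ?thesis using decomp[OF Q k1] decomp[OF Q k2] aa unfolding k1'_def k2'_def a1_def a2_def by simp
qed

lemma gidx_surj:
  assumes Q: "Q > 0" and gd: "good Q P g" and N: "N \<ge> 1" and Pj: "P j \<ge> 1"
  shows "\<exists>k\<ge>1. rost Q g k = j \<and> gidx Q P g k = N"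
proof -
  define a where "a = (N-1) div P j"
  define n where "n = (N-1) mod P j + 1"
  have "(j, n) \<in> (SIGMA j:UNIV. {1..P j})" unfolding n_def using Pj by (simp add: Suc_leI)
  hence "(j, n) \<in> g ` {1..Q}" using gd unfolding good_def bij_betw_def by simp
  then obtain k' where k': "k' \<in> {1..Q}" "g k' = (j, n)" by auto
  obtain k'' where k'': "k' = Suc k''" using k' by (cases k') auto
  define k where "k = a * Q + k'"
  have k1: "k - 1 = k'' + a * Q" using k'' by (simp add: k_def)
  have kQ: "k'' < Q" using k' k'' by simp
  have km: "(k-1) mod Q + 1 = k'" unfolding k1 using kQ k'' by simp
  have kd: "(k-1) div Q = a" unfolding k1 using kQ Q by simp
  have "N - 1 = (N - 1) mod P j + a * P j" using div_mult_mod_eq[of "N-1" "P j"] unfolding a_def by linarith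
  hence "N = n + a * P j" unfolding n_def using N by linarith
  hence "gidx Q P g k = N" unfolding gidx_def km kd using k' by simp
  moreover have "rost Q g k = j" unfolding rost_def km using k' by simp
  moreover have "k \<ge> 1" unfolding k_def using k' by simp
  ultimately show ?thesis by blast
qed

lemma count_bounds:
  assumes Q: "Q > 0" and gd: "good Q P g" and Pj: "P j \<ge> 1" and al: "a = real (P j) / real Q"
  shows "\<lfloor>real l * a\<rfloor> \<le> int (roster_count (rost Q g) j l) \<and> int (roster_count (rost Q g) j l) \<le> \<lceil>real l * a\<rceil>"
proof -
  define C where "C = {k \<in> {1..l}. rost Q g k = j}"
  define G where "G = gidx Q P g"
  have rc: "roster_count (rost Q g) j l = card C" unfolding roster_count_def C_def by simp
  have fC: "finite C" unfolding C_def by simp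
  have a_nn: "0 \<le> a" unfolding al by simp
  have la: "real l * a * real Q = real (l * P j)" unfolding al using Q by simp
  have injG: "inj_on G C"
  proof (rule inj_onI)
    fix k1 k2 assume "k1 \<in> C" "k2 \<in> C" "G k1 = G k2"
    thus "k1 = k2" unfolding C_def G_def using gidx_inj[OF Q gd] by auto
  qed
  have imG: "G ` C \<subseteq> {1..nat \<lceil>real l * a\<rceil>}"
  proof
    fix N assume "N \<in> G ` C"
    then obtain k where k: "k \<in> C" "N = G k" by auto
    have k1: "k \<ge> 1" "k \<le> l" "rost Q g k = j" using k(1) unfolding C_def by auto
    have w: "(N - 1) * Q < k * P j" "1 \<le> N" using window[OF Q gd k1(1)] k(2) k1(3) unfolding G_def by auto
    have "k * P j \<le> l * P j" using k1(2) by simp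
    hence "(N - 1) * Q < l * P j" using w(1) by linarith
    hence "real ((N - 1) * Q) < real (l * P j)" by (simp only: of_nat_less_iff)
    hence "real (N - 1) * real Q < real l * a * real Q" unfolding la by simp
    hence "real (N - 1) < real l * a" using Q by simp
    hence "real N < real l * a + 1" using w(2) by simp
    moreover have "real l * a \<le> real_of_int \<lceil>real l * a\<rceil>" by (rule le_of_int_ceiling)
    ultimately have "int N \<le> \<lceil>real l * a\<rceil>" by linarith
    thus "N \<in> {1..nat \<lceil>real l * a\<rceil>}" using w(2) by simp
  qed
  have "card C = card (G ` C)" using card_image[OF injG] by simp
  also have "\<dots> \<le> card {1..nat \<lceil>real l * a\<rceil>}" by (rule card_mono[OF _ imG]) simp
  finally have up: "card C \<le> nat \<lceil>real l * a\<rceil>" by simp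
  define f where "f = nat \<lfloor>real l * a\<rfloor>"
  define h where "h = (\<lambda>N. SOME k. k \<ge> 1 \<and> rost Q g k = j \<and> G k = N)"
  have hN: "h N \<ge> 1 \<and> rost Q g (h N) = j \<and> G (h N) = N" if "N \<ge> 1" for N
    unfolding h_def G_def by (rule someI_ex) (rule gidx_surj[OF Q gd that Pj])
  have injh: "inj_on h {1..f}"
  proof (rule inj_onI)
    fix N1 N2 assume "N1 \<in> {1..f}" "N2 \<in> {1..f}" "h N1 = h N2"
    hence "N1 \<ge> 1" "N2 \<ge> 1" by auto
    hence "G (h N1) = N1" "G (h N2) = N2" using hN by blast+
    thus "N1 = N2" using \<open>h N1 = h N2\<close> by metis
  qed
  have imh: "h ` {1..f} \<subseteq> C"
  proof
    fix k assume "k \<in> h ` {1..f}"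
    then obtain N where N: "N \<in> {1..f}" "k = h N" by auto
    have "N \<ge> 1" using N(1) by simp
    hence hk: "k \<ge> 1" "rost Q g k = j" "G k = N" using hN[of N] N(2) by simp_all
    have w: "(k - 1) * P j < N * Q" using window[OF Q gd hk(1)] hk unfolding G_def by auto
    have "int N \<le> \<lfloor>real l * a\<rfloor>" using N(1) unfolding f_def by auto
    hence "real N \<le> real l * a" by linarith
    hence "real N * real Q \<le> real l * a * real Q" using Q by (simp add: mult_right_mono)
    hence "real (N * Q) \<le> real (l * P j)" unfolding la by simp
    hence "N * Q \<le> l * P j" by (simp only: of_nat_le_iff)
    hence "(k - 1) * P j < l * P j" using w by linarith
    hence "k - 1 < l" by (simp add: mult_less_cancel2)
    thus "k \<in> C" unfolding C_def using hk by auto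
  qed
  have "f \<le> card C" using card_inj_on_le[OF injh imh fC] by simp
  hence lo: "\<lfloor>real l * a\<rfloor> \<le> int (card C)" unfolding f_def by linarith
  have "\<lceil>real l * a\<rceil> \<ge> 0" using a_nn by (simp add: ceiling_le_zero not_le) (smt (verit) mult_nonneg_nonneg of_nat_0_le_iff)
  hence "int (card C) \<le> \<lceil>real l * a\<rceil>" using up by linarith
  thus ?thesis using lo rc by simp
qed

lemma rc_real: "real (roster_count \<sigma> j l) = (\<Sum>k\<in>{1..l}. if \<sigma> k = j then 1 else 0)"
proof -
  have "{k \<in> {1..l}. \<sigma> k = j} = {1..l} \<inter> {k. \<sigma> k = j}" by auto
  thus ?thesis unfolding roster_count_def using sum_indicator_eq_card[of "{1..l}" "{k. \<sigma> k = j}"]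
    by (simp add: sum.If_cases)
qed

lemma rc_meas: "(\<lambda>\<sigma>. real (roster_count \<sigma> j l)) \<in> borel_measurable (PiM UNIV (\<lambda>_. count_space (UNIV::'c set)))"
  unfolding rc_real by measurable

lemma pred_ok:
  fixes \<alpha> :: "'c::finite \<Rightarrow> real"
  shows "Measurable.pred (PiM UNIV (\<lambda>_. count_space (UNIV::'c set))) (\<lambda>\<sigma>. \<forall>l\<ge>1. \<forall>j.
        \<lfloor>real l * \<alpha> j\<rfloor> \<le> int (roster_count \<sigma> j l) \<and>
        int (roster_count \<sigma> j l) \<le> \<lceil>real l * \<alpha> j\<rceil>)"
proof -
  have e: "(\<lfloor>real l * \<alpha> j\<rfloor> \<le> int (roster_count \<sigma> j l) \<and> int (roster_count \<sigma> j l) \<le> \<lceil>real l * \<alpha> j\<rceil>)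
     \<longleftrightarrow> (real_of_int \<lfloor>real l * \<alpha> j\<rfloor> \<le> real (roster_count \<sigma> j l) \<and> real (roster_count \<sigma> j l) \<le> real_of_int \<lceil>real l * \<alpha> j\<rceil>)"
    for \<sigma> l j
    by (metis of_int_le_iff of_int_of_nat_eq)
  show ?thesis unfolding e
    using rc_meas by measurable
qed

theorem mainTheorem6:
  fixes \<alpha> :: "'c::finite \<Rightarrow> real"
  assumes "CARD('c) \<ge> 2"
    and "\<And>j. \<alpha> j \<in> \<rat>"
    and "\<And>j. 0 < \<alpha> j \<and> \<alpha> j < 1"
    and "(\<Sum>j\<in>UNIV. \<alpha> j) = 1"
  shows "\<exists>M. unbiased_within_quota \<alpha> M"
proof -
  have "\<exists>Q::nat. Q > 0 \<and> (\<forall>j. \<exists>m::int. \<alpha> j * real Q = real_of_int m)"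
    by (rule common_denom) (rule assms(2))
  then obtain Q :: nat where Q: "Q > 0" and hm: "\<forall>j. \<exists>m::int. \<alpha> j * real Q = real_of_int m"
    by (elim exE conjE)
  from choice[OF hm] obtain m :: "'c \<Rightarrow> int" where m0: "\<forall>j. \<alpha> j * real Q = real_of_int (m j)"
    by (elim exE)
  have m: "\<And>j. \<alpha> j * real Q = real_of_int (m j)" using m0 by simp
  define P where "P = (\<lambda>j. nat (m j))"
  have mpos: "m j > 0" for j
  proof -
    have "\<alpha> j * real Q > 0" using assms(3)[of j] Q by simp
    thus ?thesis using m[of j] by simp
  qed
  have Preal: "real (P j) = \<alpha> j * real Q" for j unfolding P_def using m[of j] mpos[of j] by simp
  have Pge1: "P j \<ge> 1" for j unfolding P_def using mpos[of j] by simp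
  have al: "\<alpha> j = real (P j) / real Q" for j using Preal[of j] Q by simp
  have sumP: "(\<Sum>j\<in>UNIV. P j) = Q"
  proof -
    have "real (\<Sum>j\<in>UNIV. P j) = (\<Sum>j\<in>UNIV. \<alpha> j) * real Q" by (simp add: Preal sum_distrib_right)
    hence "real (\<Sum>j\<in>UNIV. P j) = real Q" using assms(4) by (simp only: mult_1)
    thus ?thesis by (simp only: of_nat_eq_iff)
  qed
  define A where "A = (SIGMA j:UNIV. {1..P j})"
  define B where "B = {1..Q}"
  define x where "x = (\<lambda>(a::'c \<times> nat) k. real (ov Q (P (fst a)) (snd a) k) / real Q)"
  have fA: "finite A" unfolding A_def by simp
  have fB: "finite B" unfolding B_def by simp
  have nn: "\<And>a b. 0 \<le> x a b" unfolding x_def by simp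
  have colnat: "(\<Sum>n\<in>{1..P j}. ov Q (P j) n k) = P j" if k: "k \<in> B" for j k
  proof -
    have "(\<Sum>n\<in>{1..P j}. ov Q (P j) n k) = (\<Sum>n\<in>{1..P j}. card ({(n-1)*Q..<n*Q} \<inter> {(k-1)*P j..<k*P j}))"
      unfolding ov_def by (simp add: Int_commute)
    also have "\<dots> = card ({0..<P j*Q} \<inter> {(k-1)*P j..<k*P j})" by (rule tile)
    also have "{0..<P j*Q} \<inter> {(k-1)*P j..<k*P j} = {(k-1)*P j..<k*P j}"
      using k unfolding B_def by (auto simp: mult.commute intro: less_le_trans)
    also have "card \<dots> = P j" using k unfolding B_def by (simp add: diff_mult_distrib)
    finally show ?thesis .
  qed
  have colreal: "real (\<Sum>n\<in>{1..P j}. ov Q (P j) n k) = real (P j)" if k: "k \<in> B" for j k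
    using colnat[OF k] by simp
  have row: "\<And>a. a \<in> A \<Longrightarrow> (\<Sum>b\<in>B. x a b) = 1"
  proof -
    fix a assume a: "a \<in> A"
    obtain j n where jn: "a = (j, n)" by fastforce
    have n: "1 \<le> n" "n \<le> P j" using a jn unfolding A_def by auto
    have "(\<Sum>k\<in>{1..Q}. ov Q (P j) n k) = card ({0..<Q * P j} \<inter> {(n-1)*Q..<n*Q})"
      unfolding ov_def by (rule tile)
    also have "{0..<Q * P j} \<inter> {(n-1)*Q..<n*Q} = {(n-1)*Q..<n*Q}"
      using n by (auto simp: mult.commute intro: less_le_trans)
    also have "card \<dots> = Q" using n by (simp add: diff_mult_distrib)
    finally have s: "(\<Sum>k\<in>{1..Q}. ov Q (P j) n k) = Q" .
    have "(\<Sum>b\<in>B. x a b) = real (\<Sum>k\<in>{1..Q}. ov Q (P j) n k) / real Q"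
      unfolding x_def B_def jn by (simp add: sum_divide_distrib)
    moreover have "real (\<Sum>k\<in>{1..Q}. ov Q (P j) n k) = real Q" using s by simp
    ultimately show "(\<Sum>b\<in>B. x a b) = 1" using Q by (simp only:) simp
  qed
  have col: "\<And>b. b \<in> B \<Longrightarrow> (\<Sum>a\<in>A. x a b) = 1"
  proof -
    fix k assume k: "k \<in> B"
    have "(\<Sum>a\<in>A. x a k) = (\<Sum>j\<in>UNIV. \<Sum>n\<in>{1..P j}. x (j, n) k)"
      unfolding A_def by (simp add: sum.Sigma)
    also have "\<dots> = (\<Sum>j\<in>UNIV. real (P j) / real Q)"
    proof (rule sum.cong[OF refl])
      fix j
      have "(\<Sum>n\<in>{1..P j}. x (j, n) k) = real (\<Sum>n\<in>{1..P j}. ov Q (P j) n k) / real Q"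
        unfolding x_def by (simp add: sum_divide_distrib)
      thus "(\<Sum>n\<in>{1..P j}. x (j, n) k) = real (P j) / real Q" using colreal[OF k] by (simp only:)
    qed
    also have "\<dots> = 1" using assms(4) al by simp
    finally show "(\<Sum>a\<in>A. x a k) = 1" .
  qed
  obtain p :: "(nat \<Rightarrow> 'c \<times> nat) pmf" where
    p1: "finite (set_pmf p)" and
    p2: "\<forall>g\<in>set_pmf p. bij_betw g B A \<and> (\<forall>b\<in>B. 0 < x (g b) b)" and
    p3: "\<forall>b\<in>B. \<forall>S. measure_pmf.prob p {g. g b \<in> S} = (\<Sum>a\<in>A \<inter> S. x a b)"
  proof -
    have "\<exists>p :: (nat \<Rightarrow> 'c \<times> nat) pmf. finite (set_pmf p) \<and>
     (\<forall>g\<in>set_pmf p. bij_betw g B A \<and> (\<forall>b\<in>B. 0 < x (g b) b)) \<and>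
     (\<forall>b\<in>B. \<forall>S. measure_pmf.prob p {g. g b \<in> S} = (\<Sum>a\<in>A \<inter> S. x a b))"
      by (rule birkhoff_pmf[OF fA fB nn]; simp add: row col)
    thus ?thesis using that by blast
  qed
  have good: "good Q P g" if "g \<in> set_pmf p" for g
    using p2 that unfolding good_def A_def B_def x_def by (auto simp: zero_less_divide_iff)
  define SP where "SP = (PiM (UNIV::nat set) (\<lambda>_. count_space (UNIV::'c set)))"
  define M where "M = distr (measure_pmf p) SP (rost Q)"
  have meas: "rost Q \<in> measurable (measure_pmf p) SP" unfolding SP_def by (simp add: space_PiM)
  have rr: "random_roster M"
    unfolding random_roster_def M_def
    using measure_pmf.prob_space_distr[OF meas] by (simp add: SP_def)
  have ae: "AE \<sigma> in M. \<forall>l\<ge>1. \<forall>j.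
        \<lfloor>real l * \<alpha> j\<rfloor> \<le> int (roster_count \<sigma> j l) \<and>
        int (roster_count \<sigma> j l) \<le> \<lceil>real l * \<alpha> j\<rceil>"
    unfolding M_def
  proof (subst AE_distr_iff[OF meas])
    show "{x \<in> space SP. \<forall>l\<ge>1. \<forall>j.
        \<lfloor>real l * \<alpha> j\<rfloor> \<le> int (roster_count x j l) \<and>
        int (roster_count x j l) \<le> \<lceil>real l * \<alpha> j\<rceil>} \<in> sets SP"
      using pred_ok[of \<alpha>] unfolding SP_def pred_def .
    show "AE g in measure_pmf p. \<forall>l\<ge>1. \<forall>j.
        \<lfloor>real l * \<alpha> j\<rfloor> \<le> int (roster_count (rost Q g) j l) \<and>
        int (roster_count (rost Q g) j l) \<le> \<lceil>real l * \<alpha> j\<rceil>"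
      unfolding AE_measure_pmf_iff
      using count_bounds[OF Q good Pge1 al] by blast
  qed
  have marg: "measure_pmf.prob p {g. rost Q g k = j} = \<alpha> j" if k: "k \<ge> 1" for k j
  proof -
    define k' where "k' = (k - 1) mod Q + 1"
    have k'B: "k' \<in> B" unfolding k'_def B_def using Q by (simp add: Suc_leI)
    have "{g. rost Q g k = j} = {g. g k' \<in> {a. fst a = j}}" unfolding rost_def k'_def by simp
    moreover have "measure_pmf.prob p {g. g k' \<in> {a. fst a = j}} = (\<Sum>a\<in>A \<inter> {a. fst a = j}. x a k')"
      using p3 k'B by blast
    ultimately have "measure_pmf.prob p {g. rost Q g k = j} = (\<Sum>a\<in>A \<inter> {a. fst a = j}. x a k')"
      by (simp only:)
    also have "A \<inter> {a. fst a = j} = Pair j ` {1..P j}" unfolding A_def by auto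
    also have "(\<Sum>a\<in>Pair j ` {1..P j}. x a k') = (\<Sum>n\<in>{1..P j}. x (j, n) k')"
      by (subst sum.reindex) (simp_all add: inj_on_def)
    also have "\<dots> = real (\<Sum>n\<in>{1..P j}. ov Q (P j) n k') / real Q"
      unfolding x_def by (simp add: sum_divide_distrib)
    also have "\<dots> = \<alpha> j" using colreal[OF k'B] al by (simp only:)
    finally show ?thesis .
  qed
  have ex: "(\<integral>\<sigma>. real (roster_count \<sigma> j l) \<partial>M) = real l * \<alpha> j" if "l \<ge> 1" for l j
  proof -
    have "(\<integral>\<sigma>. real (roster_count \<sigma> j l) \<partial>M) = (\<integral>g. real (roster_count (rost Q g) j l) \<partial>measure_pmf p)"
      unfolding M_def using meas rc_meas[of j l] unfolding SP_def by (simp add: integral_distr)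
    also have "\<dots> = (\<integral>g. (\<Sum>k\<in>{1..l}. indicator {g. rost Q g k = j} g) \<partial>measure_pmf p)"
      unfolding rc_real by (simp only: indicator_def mem_Collect_eq of_bool_def)
    also have "\<dots> = (\<Sum>k\<in>{1..l}. (\<integral>g. indicator {g. rost Q g k = j} g \<partial>measure_pmf p))"
      by (intro integral_sum') (simp add: integrable_measure_pmf_finite[OF p1] simp_implies_def)
    also have "\<dots> = (\<Sum>k\<in>{1..l}. \<alpha> j)"
      by (rule sum.cong[OF refl]) (simp add: marg)
    also have "\<dots> = real l * \<alpha> j" by simp
    finally show ?thesis .
  qed
  show ?thesis unfolding unbiased_within_quota_def using rr ae ex by blast
qed

end
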